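(* For all integers $n,k\ge 0$, the map $\phi'$ defined below restricts to a bijection from the set of bilateral Dyck paths of semilength $n$ with $k$ up-steps at odd height onto the set of bilateral Dyck paths of semilength $n$ with $k$ peaks. Definition of $\phi'$: (a) if $W$ is a Dyck word, $\phi'(W)=\phi(W)$; (b) if $W$ is a negative Dyck word, $\phi'(W)=\alpha(\phi(\beta(\alpha(W))))$; (c) if the path of $W$ has $l>0$ crossings, $W$ decomposes uniquely as $W=W_1W_2\cdots W_{l+1}$ where the $W_i$ are alternately nonempty Dyck words and negative Dyck words, and $\phi'(W)=\phi'(W_1)\phi'(W_2)\cdots\phi'(W_{l+1})$. Here: $\alpha$ replaces every $U$ by $D$ and every $D$ by $U$ (reflection in the $x$-axis). $\beta$ is defined on Dyck words: a nonempty Dyck word decomposes uniquely as $UW_1DW_2$ with $W_1,W_2$ Dyck words, and $\beta(UW_1DW_2)=UW_2DW_1$. $\phi$ is defined on Dyck words by $\phi(\epsilon)=\epsilon$ and, for a nonempty Dyck word $W$ whose path has $s\ge0$ down-steps at height $2$ before its first contact, with unique decomposition $W=U\big(\prod_{i=1}^{s}UW_iD\big)DW_{s+1}$ ($W_i$ Dyck words), $\phi(W)=\big(\prod_{i=1}^{s}U\,\phi(W_i)\big)\,UD\,D^{s}\,\phi(W_{s+1})$.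
   Context: Paths have steps $(1,1)$ (up-step, letter $U$) and $(1,-1)$ (down-step, letter $D$), start at $(0,0)$; paths and words in $\{U,D\}$ are identified, $\epsilon$ is the empty word, products denote concatenation and $D^s$ is $s$ copies of $D$. A bilateral Dyck path is such a path ending on the line $y=0$ (no other restriction). A Dyck path is a bilateral Dyck path with no vertex of negative $y$-coordinate; a negative Dyck path is a bilateral Dyck path of nonzero length with no vertex of positive $y$-coordinate. The semilength is half the number of steps. An up-step is at height $j$ if it goes from $(i-1,j-1)$ to $(i,j)$; a down-step is at height $j$ if it goes from $(i,j)$ to $(i+1,j-1)$; it is at odd height if $j$ is odd. A peak is an up-step immediately followed by a down-step. A contact is a down-step at height $1$ or an up-step at height $0$. A crossing is a down-step at height $1$ immediately followed by a down-step at height $0$, or an up-step at height $0$ immediately followed by an up-step at height $1$. *)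

theory Defs
  imports Main
begin

datatype step = U | D

fun flip :: "step \<Rightarrow> step" where
  "flip U = D" | "flip D = U"

definition alpha :: "step list \<Rightarrow> step list" where
  "alpha w = map flip w"

lemma length_alpha[simp]: "length (alpha w) = length w"
  by (simp add: alpha_def)

fun ht :: "step list \<Rightarrow> int" where
  "ht [] = 0"
| "ht (U # w) = ht w + 1"
| "ht (D # w) = ht w - 1"

definition bilateral :: "step list \<Rightarrow> bool" where
  "bilateral w \<longleftrightarrow> ht w = 0"

definition dyck :: "step list \<Rightarrow> bool" where
  "dyck w \<longleftrightarrow> ht w = 0 \<and> (\<forall>k\<le>length w. 0 \<le> ht (take k w))"

definition neg_dyck :: "step list \<Rightarrow> bool" where
  "neg_dyck w \<longleftrightarrow> w \<noteq> [] \<and> ht w = 0 \<and> (\<forall>k\<le>length w. ht (take k w) \<le> 0)"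

text \<open>Number of up-steps at odd height: the up-step at position i (0-based)
  ends at height ht (take (i+1) w).\<close>
definition odd_ups :: "step list \<Rightarrow> nat" where
  "odd_ups w = card {i. i < length w \<and> w ! i = U \<and> odd (ht (take (Suc i) w))}"

definition peaks :: "step list \<Rightarrow> nat" where
  "peaks w = card {i. Suc i < length w \<and> w ! i = U \<and> w ! Suc i = D}"

text \<open>splitaux d xs: starting at depth d above the base line, scan xs until the
  first step returning to the base line; return (part before that step, part after).\<close>
fun splitaux :: "nat \<Rightarrow> step list \<Rightarrow> step list \<times> step list" where
  "splitaux d [] = ([], [])"
| "splitaux d (U # xs) = (case splitaux (Suc d) xs of (a, b) \<Rightarrow> (U # a, b))"
| "splitaux 0 (D # xs) = ([], xs)"
| "splitaux (Suc 0) (D # xs) = ([], xs)"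
| "splitaux (Suc (Suc d)) (D # xs) = (case splitaux (Suc d) xs of (a, b) \<Rightarrow> (D # a, b))"

lemma splitaux_len:
  "length (fst (splitaux d xs)) + length (snd (splitaux d xs)) \<le> length xs"
  by (induction d xs rule: splitaux.induct) (auto split: prod.splits)

lemma splitaux_len':
  "splitaux d xs = (a, b) \<Longrightarrow> length a + length b \<le> length xs"
  using splitaux_len[of d xs] by simp

lemma splitaux_len'':
  "(a, b) = splitaux d xs \<Longrightarrow> length a + length b \<le> length xs"
  using splitaux_len[of d xs] by (metis fst_conv snd_conv)

text \<open>Decomposition of a bilateral word into its primitive pieces (factors between
  consecutive returns to the x-axis).\<close>
function bprims :: "step list \<Rightarrow> step list list" where
  "bprims [] = []"
| "bprims (U # xs) = (case splitaux 1 xs of (a, b) \<Rightarrow> (U # a @ [D]) # bprims b)"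
| "bprims (D # xs) = (case splitaux 1 (alpha xs) of (a, b) \<Rightarrow> (D # alpha a @ [U]) # bprims (alpha b))"
  by pat_completeness auto
termination
  by (relation "measure length") (fastforce dest!: splitaux_len'')+

lemma bprims_len: "p \<in> set (bprims w) \<Longrightarrow> length p \<le> Suc (length w)"
proof (induction w rule: bprims.induct)
  case 1 then show ?case by simp
next
  case (2 xs)
  obtain a b where ab: "splitaux 1 xs = (a, b)" by fastforce
  from 2 ab splitaux_len'[OF ab] show ?case by (auto dest: 2(1)[OF ab[symmetric]])
next
  case (3 xs)
  obtain a b where ab: "splitaux 1 (alpha xs) = (a, b)" by fastforce
  from 3 ab splitaux_len'[OF ab] show ?case by (auto dest: 3(1)[OF ab[symmetric]])
qed

text \<open>phi on Dyck words: for W = U A D B (first contact after A), the factors U W_i D of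
  A are the primitive pieces of A (their closing steps are the down-steps at height 2
  before the first contact), and
  phi W = (prod_i U phi(W_i)) U D D^s phi(B).\<close>
function phi :: "step list \<Rightarrow> step list" where
  "phi [] = []"
| "phi (x # xs) = (case splitaux 1 xs of (a, b) \<Rightarrow>
      concat (map (\<lambda>p. U # phi (butlast (tl p))) (bprims a))
      @ [U, D] @ replicate (length (bprims a)) D @ phi b)"
  by pat_completeness auto
termination
  by (relation "measure length") (fastforce dest!: splitaux_len'' bprims_len)+

definition beta :: "step list \<Rightarrow> step list" where
  "beta w = (case splitaux 1 (tl w) of (a, b) \<Rightarrow> U # b @ D # a)"

text \<open>Merge consecutive primitive pieces lying on the same side of the x-axis:
  this yields the unique decomposition W = W_1 ... W_(l+1) into maximal alternately
  Dyck / negative Dyck nonempty factors (separated by the crossings).\<close>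
fun runs :: "step list list \<Rightarrow> step list list" where
  "runs [] = []"
| "runs [p] = [p]"
| "runs (p # q # ps) = (if hd p = hd q then runs ((p @ q) # ps) else p # runs (q # ps))"

definition phi_block :: "step list \<Rightarrow> step list" where
  "phi_block B = (if hd B = U then phi B else alpha (phi (beta (alpha B))))"

definition phi' :: "step list \<Rightarrow> step list" where
  "phi' w = concat (map phi_block (runs (bprims w)))"

end

theory Submission
  imports Defs
begin


fun st :: "step \<Rightarrow> int" where "st U = 1" | "st D = -1"

lemma ht_Cons: "ht (x # w) = st x + ht w" by (cases x) auto

lemma ht_append[simp]: "ht (a @ b) = ht a + ht b"
  by (induction a) (auto simp: ht_Cons)

lemma flip_flip[simp]: "flip (flip x) = x" by (cases x) auto
lemma alpha_alpha[simp]: "alpha (alpha w) = w" by (simp add: alpha_def comp_def)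
lemma alpha_simps[simp]: "alpha [] = []" "alpha (x # w) = flip x # alpha w"
  "alpha (a @ b) = alpha a @ alpha b"  by (auto simp: alpha_def)
lemma alpha_inj: "alpha a = alpha b \<Longrightarrow> a = b" by (metis alpha_alpha)
lemma st_flip[simp]: "st (flip x) = - st x" by (cases x) auto
lemma ht_alpha[simp]: "ht (alpha w) = - ht w"
  by (induction w) (auto simp: ht_Cons)
lemma take_alpha: "take k (alpha w) = alpha (take k w)" by (simp add: alpha_def take_map)
lemma hd_alpha: "w \<noteq> [] \<Longrightarrow> hd (alpha w) = flip (hd w)" by (cases w) auto
lemma last_alpha: "w \<noteq> [] \<Longrightarrow> last (alpha w) = flip (last w)" by (simp add: alpha_def last_map)
lemma alpha_Nil_iff[simp]: "alpha w = [] \<longleftrightarrow> w = []" by (simp add: alpha_def)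
lemma alpha_replicate: "alpha (replicate s x) = replicate s (flip x)" by (simp add: alpha_def)

fun nn :: "int \<Rightarrow> step list \<Rightarrow> bool" where
  "nn h [] = (0 \<le> h)"
| "nn h (x # w) = (0 \<le> h \<and> nn (h + st x) w)"

lemma nn_append[simp]: "nn h (a @ b) \<longleftrightarrow> nn h a \<and> nn (h + ht a) b"
proof (induction a arbitrary: h)
  case Nil then show ?case by (cases b) auto
next
  case (Cons x a) then show ?case by (auto simp: ht_Cons add.assoc)
qed

lemma nn_ht: "nn h w \<Longrightarrow> 0 \<le> h + ht w"
  apply (induction w arbitrary: h)
   apply simp
  apply (simp add: ht_Cons)
  by (metis add.assoc)

lemma nn_ge: "nn h w \<Longrightarrow> 0 \<le> h" by (cases w) auto

lemma nn_mono: "nn h w \<Longrightarrow> h \<le> h' \<Longrightarrow> nn h' w"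
  by (induction w arbitrary: h h') fastforce+

lemma nn_take: "nn h w \<longleftrightarrow> (\<forall>k\<le>length w. 0 \<le> h + ht (take k w))"
proof (induction w arbitrary: h)
  case Nil then show ?case by auto
next
  case (Cons x w)
  have "(\<forall>k\<le>length (x#w). 0 \<le> h + ht (take k (x#w))) \<longleftrightarrow>
        0 \<le> h \<and> (\<forall>k\<le>length w. 0 \<le> h + st x + ht (take k w))"
    (is "?L \<longleftrightarrow> ?R")
  proof
    assume L: ?L
    have "0 \<le> h" using L[rule_format, of 0] by simp
    moreover have "\<forall>k\<le>length w. 0 \<le> h + st x + ht (take k w)"
    proof (intro allI impI)
      fix k assume "k \<le> length w"
      then show "0 \<le> h + st x + ht (take k w)" using L[rule_format, of "Suc k"] by (simp add: ht_Cons)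
    qed
    ultimately show ?R by simp
  next
    assume R: ?R
    show ?L
    proof (intro allI impI)
      fix k assume k: "k \<le> length (x#w)"
      show "0 \<le> h + ht (take k (x#w))"
      proof (cases k)
        case 0 then show ?thesis using R by simp
      next
        case (Suc j) then show ?thesis using R k by (auto simp: ht_Cons)
      qed
    qed
  qed
  then show ?case using Cons by simp
qed

lemma dyck_nn: "dyck w \<longleftrightarrow> ht w = 0 \<and> nn 0 w"
  by (simp add: dyck_def nn_take)

lemma neg_dyck_alpha: "neg_dyck w \<longleftrightarrow> w \<noteq> [] \<and> dyck (alpha w)"
  by (auto simp: neg_dyck_def dyck_def take_alpha)

lemma nn_replicate_D: "int s \<le> h \<Longrightarrow> nn h (replicate s D)"
  by (induction s arbitrary: h) auto

lemma nn_D_Cons: "nn 0 (D # w) = False" using nn_ge[of "-1" w] by auto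

lemma dyck_hd: "dyck w \<Longrightarrow> w \<noteq> [] \<Longrightarrow> hd w = U"
  by (cases w; cases "hd w") (auto simp: dyck_nn dest: nn_ge)

lemma dyck_wrap: "dyck Q \<Longrightarrow> dyck R \<Longrightarrow> dyck (U # Q @ D # R)"
  by (auto simp: dyck_nn ht_Cons elim: nn_mono)

lemma dyck_app: "dyck a \<Longrightarrow> dyck b \<Longrightarrow> dyck (a @ b)"
  by (auto simp: dyck_nn)

lemma ht_replicate_D[simp]: "ht (replicate s D) = - int s"
  by (induction s) auto

lemma first_return:
  "ht xs + d \<le> 0 \<Longrightarrow> 1 \<le> (d::int) \<Longrightarrow>
   \<exists>A B. xs = A @ D # B \<and> d + ht A = 1 \<and> nn (d - 1) A"
proof (induction xs arbitrary: d)
  case Nil then show ?case by simp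
next
  case (Cons x ys)
  show ?case
  proof (cases x)
    case U
    with Cons.prems have "ht ys + (d+1) \<le> 0" by simp
    with Cons.IH[of "d+1"] Cons.prems obtain A B where
      "ys = A @ D # B" "d + 1 + ht A = 1" "nn (d + 1 - 1) A" by auto
    then show ?thesis using U Cons.prems
      by (intro exI[of _ "U # A"] exI[of _ B]) auto
  next
    case D
    show ?thesis
    proof (cases "d = 1")
      case True then show ?thesis using D by (intro exI[of _ "[]"] exI[of _ ys]) auto
    next
      case False
      with Cons.prems D have "ht ys + (d-1) \<le> 0" "1 \<le> d - 1" by auto
      with Cons.IH[of "d-1"] obtain A B where
        "ys = A @ D # B" "d - 1 + ht A = 1" "nn (d - 1 - 1) A" by auto
      then show ?thesis using D Cons.prems
        by (intro exI[of _ "D # A"] exI[of _ B]) (auto simp: algebra_simps)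
    qed
  qed
qed

lemma splitaux_eq:
  "1 \<le> d \<Longrightarrow> int d + ht A = 1 \<Longrightarrow> nn (int d - 1) A \<Longrightarrow> splitaux d (A @ D # B) = (A, B)"
proof (induction A arbitrary: d)
  case Nil then have "d = Suc 0" by simp
  then show ?case by simp
next
  case (Cons x A)
  show ?case
  proof (cases x)
    case U
    with Cons.prems have "splitaux (Suc d) (A @ D # B) = (A, B)"
      by (intro Cons.IH) (auto simp: algebra_simps)
    then show ?thesis using U by simp
  next
    case D
    with Cons.prems have d2: "2 \<le> d" by (auto dest: nn_ge)
    then obtain e where e: "d = Suc (Suc e)" by (metis add_2_eq_Suc le_Suc_ex)
    with D Cons.prems have "splitaux (Suc e) (A @ D # B) = (A, B)"
      by (intro Cons.IH) (auto simp: algebra_simps)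
    then show ?thesis using D e by simp
  qed
qed

lemma dyck_split:
  assumes "dyck (U # xs)"
  obtains A B where "xs = A @ D # B" "dyck A" "dyck B" "splitaux 1 xs = (A, B)"
proof -
  from assms have "ht xs + 1 \<le> 0" by (simp add: dyck_nn)
  from first_return[OF this] obtain A B where AB: "xs = A @ D # B" "1 + ht A = 1" "nn 0 A" by auto
  have sp: "splitaux 1 xs = (A, B)" using AB by (simp add: splitaux_eq)
  from assms AB have "dyck A" "dyck B" by (auto simp: dyck_nn ht_Cons)
  with AB sp that show ?thesis by blast
qed

lemma splitaux_dyck: "dyck A \<Longrightarrow> splitaux 1 (A @ D # B) = (A, B)"
  by (rule splitaux_eq) (auto simp: dyck_nn)



fun oddc :: "int \<Rightarrow> step list \<Rightarrow> nat" where
  "oddc h [] = 0"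
| "oddc h (x # w) = (if x = U \<and> odd (h + 1) then 1 else 0) + oddc (h + st x) w"

fun oddd :: "int \<Rightarrow> step list \<Rightarrow> nat" where
  "oddd h [] = 0"
| "oddd h (x # w) = (if x = D \<and> odd (h - 1) then 1 else 0) + oddd (h + st x) w"

fun pk :: "step list \<Rightarrow> nat" where
  "pk [] = 0"
| "pk (x # w) = (if w \<noteq> [] \<and> x = U \<and> hd w = D then 1 else 0) + pk w"

lemma card_Suc_split:
  assumes "finite {i. Q (Suc i)}"
  shows "card {i. Q i} = (if Q 0 then 1 else 0) + card {i. Q (Suc i)}"
proof -
  have eq: "{i. Q i} = (if Q 0 then {0} else {}) \<union> Suc ` {i. Q (Suc i)}"
  proof (intro set_eqI iffI)
    fix i assume "i \<in> {i. Q i}"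
    then show "i \<in> (if Q 0 then {0} else {}) \<union> Suc ` {i. Q (Suc i)}"
      by (cases i) auto
  qed (auto split: if_splits)
  have "card ((if Q 0 then {0} else {}) \<union> Suc ` {i. Q (Suc i)}) =
        card (if Q 0 then {0::nat} else {}) + card (Suc ` {i. Q (Suc i)})"
    by (rule card_Un_disjoint) (use assms in auto)
  also have "card (Suc ` {i. Q (Suc i)}) = card {i. Q (Suc i)}"
    by (rule card_image) simp
  finally show ?thesis using eq by simp
qed

lemma odd_ups_gen:
  "card {i. i < length w \<and> w ! i = U \<and> odd (h + ht (take (Suc i) w))} = oddc h w"
proof (induction w arbitrary: h)
  case Nil then show ?case by simp
next
  case (Cons x w)
  have fin: "finite {i. Suc i < length (x#w) \<and> (x#w) ! Suc i = U \<and> odd (h + ht (take (Suc (Suc i)) (x#w)))}"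
    by (rule finite_subset[of _ "{..<length (x#w)}"]) auto
  have "card {i. i < length (x#w) \<and> (x#w) ! i = U \<and> odd (h + ht (take (Suc i) (x#w)))}
     = (if x = U \<and> odd (h + 1) then 1 else 0) +
       card {i. i < length w \<and> w ! i = U \<and> odd ((h + st x) + ht (take (Suc i) w))}"
    by (subst card_Suc_split[OF fin]) (cases x; auto simp: ht_Cons add.assoc)
  also have "\<dots> = oddc h (x#w)" by (simp only: Cons.IH oddc.simps)
  finally show ?case .
qed

lemma odd_ups_oddc: "odd_ups w = oddc 0 w"
  unfolding odd_ups_def using odd_ups_gen[of w 0] by simp

lemma peaks_pk: "peaks w = pk w"
proof (induction w)
  case Nil then show ?case by (simp add: peaks_def)
next
  case (Cons x w)
  have fin: "finite {i. Suc (Suc i) < length (x#w) \<and> (x#w) ! Suc i = U \<and> (x#w) ! Suc (Suc i) = D}"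
    by (rule finite_subset[of _ "{..<length (x#w)}"]) auto
  have "peaks (x#w) = (if Suc 0 < length (x#w) \<and> x = U \<and> (x#w) ! Suc 0 = D then 1 else 0) +
      card {i. Suc i < length w \<and> w ! i = U \<and> w ! Suc i = D}"
    unfolding peaks_def by (subst card_Suc_split[OF fin]) auto
  also have "\<dots> = pk (x # w)" using Cons by (cases w) (auto simp: peaks_def)
  finally show ?case .
qed

lemma pk_append: "pk (a @ b) = pk a + pk b + (if a \<noteq> [] \<and> b \<noteq> [] \<and> last a = U \<and> hd b = D then 1 else 0)"
  by (induction a) auto

lemma oddc_append: "oddc h (a @ b) = oddc h a + oddc (h + ht a) b"
  by (induction a arbitrary: h) (auto simp: ht_Cons add.assoc)

lemma oddd_append: "oddd h (a @ b) = oddd h a + oddd (h + ht a) b"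
  by (induction a arbitrary: h) (auto simp: ht_Cons add.assoc)

lemma oddc_parity: "even (h - h') \<Longrightarrow> oddc h w = oddc h' w"
proof (induction w arbitrary: h h')
  case Nil then show ?case by simp
next
  case (Cons x w)
  have "even ((h + st x) - (h' + st x))" using Cons.prems by simp
  from Cons.IH[OF this] Cons.prems show ?case by auto
qed

lemma oddc_alpha: "oddc h (alpha w) = oddd (- h) w"
  by (induction w arbitrary: h) (auto elim: flip.elims)

lemma oddd_parity: "even (h - h') \<Longrightarrow> oddd h w = oddd h' w"
proof (induction w arbitrary: h h')
  case Nil then show ?case by simp
next
  case (Cons x w)
  have "even ((h + st x) - (h' + st x))" using Cons.prems by simp
  from Cons.IH[OF this] Cons.prems show ?case by auto
qed

lemma oddc_oddd_gen: "int (oddc (h+1) w) - int (oddd h w) = (h + ht w) div 2 - h div 2"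
proof (induction w arbitrary: h)
  case Nil then show ?case by simp
next
  case (Cons x w)
  show ?case
  proof (cases x)
    case U
    have "int (oddc (h + 1 + 1) w) - int (oddd (h + 1) w) = (h + 1 + ht w) div 2 - (h + 1) div 2"
      using Cons.IH[of "h+1"] .
    then show ?thesis using U by (simp add: algebra_simps) presburger
  next
    case D
    have "int (oddc (h - 1 + 1) w) - int (oddd (h - 1) w) = (h - 1 + ht w) div 2 - (h - 1) div 2"
      using Cons.IH[of "h-1"] .
    then show ?thesis using D by (simp add: algebra_simps) presburger
  qed
qed

lemma oddc_oddd: "ht w = 0 \<Longrightarrow> oddc (h+1) w = oddd h w"
  using oddc_oddd_gen[of h w] by simp

lemma pk_replicate_D[simp]: "pk (replicate s D) = 0"
  by (induction s) auto

lemma pk_alpha: "w \<noteq> [] \<Longrightarrow>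
  int (pk w) - int (pk (alpha w)) = (if hd w = U then 1 else 0) - (if last w = U then 1 else 0)"
proof (induction w)
  case Nil then show ?case by simp
next
  case (Cons x w)
  show ?case
  proof (cases "w = []")
    case True then show ?thesis by (cases x) auto
  next
    case False
    then show ?thesis using Cons.IH by (cases x; cases "hd w") (auto simp: hd_alpha)
  qed
qed



definition pos_prim :: "step list \<Rightarrow> bool" where
  "pos_prim p \<longleftrightarrow> (\<exists>I. p = U # I @ [D] \<and> dyck I)"
definition neg_prim :: "step list \<Rightarrow> bool" where
  "neg_prim p \<longleftrightarrow> (\<exists>I. p = D # alpha I @ [U] \<and> dyck I)"
definition blk :: "step list \<Rightarrow> bool" where
  "blk b \<longleftrightarrow> (b \<noteq> [] \<and> hd b = U \<and> dyck b) \<or> (hd b = D \<and> neg_dyck b)"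

lemma bprims_props:
  "ht w = 0 \<Longrightarrow> concat (bprims w) = w \<and> (\<forall>p\<in>set (bprims w). pos_prim p \<or> neg_prim p)
    \<and> (nn 0 w \<longrightarrow> (\<forall>p\<in>set (bprims w). pos_prim p))"
proof (induction w rule: bprims.induct)
  case 1 then show ?case by simp
next
  case (2 xs)
  from 2 have "ht xs + 1 \<le> 0" by simp
  from first_return[OF this] obtain A B where AB: "xs = A @ D # B" "1 + ht A = 1" "nn 0 A" by auto
  have sp: "splitaux 1 xs = (A, B)" using AB by (simp add: splitaux_eq)
  have dA: "dyck A" using AB by (simp add: dyck_nn)
  have hB: "ht B = 0" using 2(2) AB by simp
  from 2(1)[OF sp[symmetric] hB] have IH: "concat (bprims B) = B \<and>
     (\<forall>p\<in>set (bprims B). pos_prim p \<or> neg_prim p) \<and> (nn 0 B \<longrightarrow> (\<forall>p\<in>set (bprims B). pos_prim p))" .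
  have pp: "pos_prim (U # A @ [D])" using dA by (auto simp: pos_prim_def)
  have nB: "nn 0 (U # xs) \<Longrightarrow> nn 0 B" using AB by simp
  show ?case using IH sp AB pp nB by auto
next
  case (3 xs)
  from 3 have "ht (alpha xs) + 1 \<le> 0" by simp
  from first_return[OF this] obtain A B where AB: "alpha xs = A @ D # B" "1 + ht A = 1" "nn 0 A" by auto
  have sp: "splitaux 1 (alpha xs) = (A, B)" using AB by (simp add: splitaux_eq)
  have dA: "dyck A" using AB by (simp add: dyck_nn)
  have xs: "xs = alpha A @ U # alpha B" using arg_cong[OF AB(1), of alpha] by simp
  have hB: "ht (alpha B) = 0" using 3(2) xs AB(2) by simp
  from 3(1)[OF sp[symmetric] hB] have IH: "concat (bprims (alpha B)) = alpha B \<and>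
     (\<forall>p\<in>set (bprims (alpha B)). pos_prim p \<or> neg_prim p)" by blast
  have pp: "neg_prim (D # alpha A @ [U])" using dA by (auto simp: neg_prim_def)
  have "\<not> nn 0 (D # xs)" using nn_D_Cons by blast
  then show ?case using IH sp xs pp by auto
qed

lemma bprims_dyck: "dyck w \<Longrightarrow> concat (bprims w) = w \<and> (\<forall>p\<in>set (bprims w). pos_prim p)"
  using bprims_props[of w] by (auto simp: dyck_nn)

lemma bprims_bil: "ht w = 0 \<Longrightarrow> concat (bprims w) = w \<and> (\<forall>p\<in>set (bprims w). blk p)"
proof -
  assume h: "ht w = 0"
  have "pos_prim p \<Longrightarrow> blk p" for p
    by (auto simp: pos_prim_def blk_def dyck_nn ht_Cons dest: nn_mono[where h'=1])
  moreover have "neg_prim p \<Longrightarrow> blk p" for p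
  proof -
    assume "neg_prim p"
    then obtain I where I: "p = D # alpha I @ [U]" "dyck I" by (auto simp: neg_prim_def)
    have "dyck (U # I @ D # [])" by (rule dyck_wrap) (use I in \<open>auto simp: dyck_nn\<close>)
    moreover have "alpha p = U # I @ [D]" using I by simp
    ultimately show "blk p" using I by (auto simp: blk_def neg_dyck_alpha)
  qed
  ultimately show ?thesis using bprims_props[OF h] by blast
qed

fun alt :: "step list list \<Rightarrow> bool" where
  "alt (p # q # ps) = (hd p \<noteq> hd q \<and> alt (q # ps))"
| "alt _ = True"

lemma dyck_nonneg_hd: "nn 0 w \<Longrightarrow> w \<noteq> [] \<Longrightarrow> hd w = U"
  by (cases w; cases "hd w") (auto dest: nn_ge)

lemma blk_append: "blk p \<Longrightarrow> blk q \<Longrightarrow> hd p = hd q \<Longrightarrow> blk (p @ q)"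
  unfolding blk_def
  by (auto simp: dyck_app neg_dyck_alpha)

lemma blk_ne: "blk b \<Longrightarrow> b \<noteq> []"
  by (auto simp: blk_def neg_dyck_def)

lemma runs_props:
  "\<forall>b\<in>set ps. blk b \<Longrightarrow> (\<forall>b\<in>set (runs ps). blk b) \<and> concat (runs ps) = concat ps \<and>
    alt (runs ps) \<and> (ps \<noteq> [] \<longrightarrow> runs ps \<noteq> [] \<and> hd (hd (runs ps)) = hd (hd ps))"
proof (induction ps rule: runs.induct)
  case 1 then show ?case by simp
next
  case (2 p) then show ?case by simp
next
  case (3 p q ps)
  have np: "p \<noteq> []" using 3(3) by (auto dest: blk_ne)
  show ?case
  proof (cases "hd p = hd q")
    case True
    have "\<forall>b\<in>set ((p @ q) # ps). blk b" using 3(3) True by (auto intro: blk_append)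
    from 3(1)[OF True this] show ?thesis using True np by auto
  next
    case False
    have "\<forall>b\<in>set (q # ps). blk b" using 3(3) by auto
    from 3(2)[OF False this] have IH: "(\<forall>b\<in>set (runs (q # ps)). blk b) \<and>
      concat (runs (q # ps)) = concat (q # ps) \<and> alt (runs (q # ps)) \<and>
      runs (q # ps) \<noteq> [] \<and> hd (hd (runs (q # ps))) = hd q" by simp
    then obtain r rs where r: "runs (q # ps) = r # rs" by (cases "runs (q # ps)") auto
    show ?thesis using IH False 3(3) r by auto
  qed
qed



definition Gs :: "(step list \<Rightarrow> step list) \<Rightarrow> step list list \<Rightarrow> step list" where
  "Gs f ps = concat (map (\<lambda>p. U # f p) ps)"

lemma Gs_simps[simp]: "Gs f [] = []" "Gs f (p # ps) = U # f p @ Gs f ps"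
  by (auto simp: Gs_def)

lemma Gs_nn: "\<forall>p\<in>set ps. dyck (f p) \<Longrightarrow>
  nn 0 (Gs f ps) \<and> ht (Gs f ps) = int (length ps) \<and> (Gs f ps = [] \<or> (\<exists>Y. Gs f ps = U # Y \<and> nn 0 Y))"
proof (induction ps)
  case Nil then show ?case by simp
next
  case (Cons p ps)
  then have "dyck (f p)" "nn 0 (Gs f ps)" "ht (Gs f ps) = int (length ps)" by auto
  then show ?case by (auto simp: dyck_nn ht_Cons dest: nn_mono[where h'=1])
qed

lemma Gs_T: "\<forall>p\<in>set ps. dyck (f p) \<Longrightarrow> \<exists>T. Gs f ps @ [U] = U # T \<and> nn 0 T \<and> ht T = int (length ps)"
proof (induction ps)
  case Nil then show ?case by simp
next
  case (Cons p ps)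
  then obtain T where T: "Gs f ps @ [U] = U # T" "nn 0 T" "ht T = int (length ps)" by auto
  have "dyck (f p)" using Cons by auto
  then show ?case using T
    by (intro exI[of _ "f p @ U # T"]) (auto simp: dyck_nn dest: nn_mono[where h'=1])
qed

lemma Gs_len: "\<forall>p\<in>set ps. length p = length (f p) + 2 \<Longrightarrow>
  length (Gs f ps) + length ps = length (concat ps)"
  by (induction ps) auto

lemma Gs_pk: "\<forall>p\<in>set ps. f p = [] \<or> hd (f p) = U \<Longrightarrow>
  pk (Gs f ps) = sum_list (map (\<lambda>p. pk (f p)) ps)"
proof (induction ps)
  case Nil then show ?case by simp
next
  case (Cons p ps)
  have "pk (U # f p @ Gs f ps) = pk (U # f p) + pk (Gs f ps)"
    using pk_append[of "U # f p" "Gs f ps"] by (cases ps) auto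
  moreover have "pk (U # f p) = pk (f p)" using Cons.prems by (cases "f p") auto
  ultimately show ?case using Cons by simp
qed

lemma oddc_prims: "\<forall>p\<in>set ps. pos_prim p \<Longrightarrow>
  oddc 1 (concat ps) = sum_list (map (\<lambda>p. oddc 0 (butlast (tl p))) ps)"
proof (induction ps)
  case Nil then show ?case by simp
next
  case (Cons p ps)
  then obtain I where I: "p = U # I @ [D]" "dyck I" by (auto simp: pos_prim_def)
  have "oddc 1 (concat (p # ps)) = oddc 2 I + oddc 1 (concat ps)"
    using I by (simp add: oddc_append dyck_nn)
  moreover have "oddc 2 I = oddc 0 I" by (rule oddc_parity) simp
  ultimately show ?case using Cons I by simp
qed

lemma phi_U: "splitaux 1 xs = (A, B) \<Longrightarrow>
  phi (x # xs) = Gs (\<lambda>p. phi (butlast (tl p))) (bprims A) @ [U, D] @ replicate (length (bprims A)) D @ phi B"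
  by (simp add: Gs_def phi.simps(2))

lemma inner_pos: "pos_prim p \<Longrightarrow> dyck (butlast (tl p)) \<and> p = U # butlast (tl p) @ [D]"
  by (auto simp: pos_prim_def)

declare phi.simps(2)[simp del]

lemma phi_props:
  "dyck W \<Longrightarrow> length (phi W) = length W \<and> dyck (phi W) \<and> pk (phi W) = oddc 0 W \<and>
     (W \<noteq> [] \<longrightarrow> hd (phi W) = U \<and> last (phi W) = D)"
proof (induction W rule: phi.induct)
  case 1 then show ?case by (simp add: dyck_nn)
next
  case (2 x xs)
  have x: "x = U" using dyck_hd[OF "2.prems"] by simp
  obtain A B where AB: "xs = A @ D # B" "dyck A" "dyck B" and sp: "splitaux 1 xs = (A, B)"
    using dyck_split "2.prems" x by blast
  define ps where "ps = bprims A"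
  define f where "f = (\<lambda>p. phi (butlast (tl p)))"
  define s where "s = length ps"
  have ps: "concat ps = A" "\<forall>p\<in>set ps. pos_prim p" using bprims_dyck[OF AB(2)] ps_def by auto
  have IHp: "\<forall>p\<in>set ps. length (f p) = length (butlast (tl p)) \<and> dyck (f p) \<and>
      pk (f p) = oddc 0 (butlast (tl p)) \<and> (f p = [] \<or> hd (f p) = U)"
  proof
    fix p assume p: "p \<in> set ps"
    have d: "dyck (butlast (tl p))" using inner_pos ps(2) p by blast
    from "2.IH"(1)[OF sp[symmetric] p[unfolded ps_def] d]
    show "length (f p) = length (butlast (tl p)) \<and> dyck (f p) \<and>
      pk (f p) = oddc 0 (butlast (tl p)) \<and> (f p = [] \<or> hd (f p) = U)" unfolding f_def by auto
  qed
  have IHB: "length (phi B) = length B \<and> dyck (phi B) \<and> pk (phi B) = oddc 0 B \<and>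
     (B \<noteq> [] \<longrightarrow> hd (phi B) = U \<and> last (phi B) = D)"
    using "2.IH"(2)[OF sp[symmetric] AB(3)] .
  have eq: "phi (x # xs) = Gs f ps @ [U, D] @ replicate s D @ phi B"
    unfolding f_def ps_def s_def by (rule phi_U[OF sp])
  obtain T where T: "Gs f ps @ [U] = U # T" "nn 0 T" "ht T = int s"
    using Gs_T[of ps f] IHp s_def by auto
  have eq2: "phi (x # xs) = U # (T @ replicate s D) @ D # phi B"
  proof -
    have r: "D # replicate s D = replicate s D @ [D]" by (induction s) auto
    have "phi (x#xs) = (Gs f ps @ [U]) @ (D # replicate s D) @ phi B" using eq by simp
    also have "\<dots> = (U # T) @ (replicate s D @ [D]) @ phi B" by (simp only: T(1) r)
    finally show ?thesis by simp
  qed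
  have lenp: "\<forall>p\<in>set ps. length p = length (f p) + 2"
  proof
    fix p assume p: "p \<in> set ps"
    then have e: "p = U # butlast (tl p) @ [D]" using inner_pos ps(2) by blast
    have "length p = length (U # butlast (tl p) @ [D])" using e by (rule arg_cong)
    then show "length p = length (f p) + 2" using IHp p by simp
  qed
  have "length (Gs f ps) + s = length A" using Gs_len[OF lenp] ps s_def by simp
  then have L: "length (phi (x # xs)) = length (x # xs)" using eq AB IHB by simp
  have "dyck (T @ replicate s D)" using T by (simp add: dyck_nn nn_replicate_D)
  then have "dyck (U # (T @ replicate s D) @ D # phi B)" using IHB dyck_wrap by blast
  then have Dy: "dyck (phi (x # xs))" unfolding eq2 .
  have pkG: "pk (Gs f ps) = sum_list (map (\<lambda>p. oddc 0 (butlast (tl p))) ps)"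
    using Gs_pk[of ps f] IHp by (simp cong: map_cong)
  have "pk (phi (x # xs)) = pk (Gs f ps) + pk (U # D # (replicate s D @ phi B))"
    unfolding eq using pk_append[of "Gs f ps" "U # D # (replicate s D @ phi B)"] by simp
  also have "pk (U # D # (replicate s D @ phi B)) = 1 + pk (replicate (Suc s) D @ phi B)" by simp
  also have "pk (replicate (Suc s) D @ phi B) = pk (phi B)"
    using pk_append[of "replicate (Suc s) D" "phi B"] by simp
  finally have P1: "pk (phi (x # xs)) = sum_list (map (\<lambda>p. oddc 0 (butlast (tl p))) ps) + 1 + oddc 0 B"
    using pkG IHB by simp
  have "oddc 0 (x # xs) = 1 + oddc 1 A + oddc 0 B"
    using x AB by (simp add: oddc_append dyck_nn)
  then have P: "pk (phi (x # xs)) = oddc 0 (x # xs)"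
    using P1 oddc_prims[OF ps(2)] ps(1) by simp
  have H: "hd (phi (x # xs)) = U" using eq2 by simp
  have La: "last (phi (x # xs)) = D"
  proof (cases "B = []")
    case True then show ?thesis using eq by simp
  next
    case False
    then have "phi B \<noteq> []" "last (phi B) = D" using IHB by auto
    then show ?thesis using eq by simp
  qed
  show ?case using L Dy P H La by simp
qed



lemma dyck_ext_hd: "dyck X \<Longrightarrow> dyck (X @ Z) \<Longrightarrow> Z \<noteq> [] \<Longrightarrow> hd Z = U"
  by (auto simp: dyck_nn intro: dyck_nonneg_hd)

lemma split_dyck:
  assumes "X @ Y = X' @ Y'" "dyck X" "dyck X'" "Y = [] \<or> hd Y = D" "Y' = [] \<or> hd Y' = D"
  shows "X = X'"
proof -
  from assms(1) obtain Z where "X = X' @ Z \<and> Z @ Y = Y' \<or> X @ Z = X' \<and> Y = Z @ Y'"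
    by (auto simp: append_eq_append_conv2)
  then show ?thesis
  proof
    assume h: "X = X' @ Z \<and> Z @ Y = Y'"
    show ?thesis
    proof (rule ccontr)
      assume "X \<noteq> X'"
      then have "Z \<noteq> []" using h by auto
      then have "hd Z = U" using dyck_ext_hd[of X' Z] assms h by auto
      then show False using h assms(5) \<open>Z \<noteq> []\<close> by auto
    qed
  next
    assume h: "X @ Z = X' \<and> Y = Z @ Y'"
    show ?thesis
    proof (rule ccontr)
      assume "X \<noteq> X'"
      then have "Z \<noteq> []" using h by auto
      then have "hd Z = U" using dyck_ext_hd[of X Z] assms h by auto
      then show False using h assms(4) \<open>Z \<noteq> []\<close> by auto
    qed
  qed
qed

definition spos :: "step list \<Rightarrow> bool" where
  "spos Y \<longleftrightarrow> Y = [] \<or> (\<exists>Y0. Y = U # Y0 \<and> nn 0 Y0)"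

lemma spos_contra: "dyck X \<Longrightarrow> dyck (X @ Z) \<Longrightarrow> Z \<noteq> [] \<Longrightarrow> spos (Z @ Y) \<Longrightarrow> False"
proof -
  assume a: "dyck X" "dyck (X @ Z)" "Z \<noteq> []" "spos (Z @ Y)"
  then have hZ: "ht Z = 0" by (simp add: dyck_nn)
  from a(1-3) have "hd Z = U" by (rule dyck_ext_hd)
  with a(3) obtain Z0 where Z: "Z = U # Z0" by (cases Z) auto
  from a(4) Z obtain Y0 where "Z0 @ Y = Y0" "nn 0 Y0" by (auto simp: spos_def)
  then have "nn 0 Z0" by auto
  then have "0 \<le> ht Z0" using nn_ht by fastforce
  then show False using hZ Z by simp
qed

lemma split_pos:
  assumes "X @ Y = X' @ Y'" "dyck X" "dyck X'" "spos Y" "spos Y'"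
  shows "X = X'"
proof -
  from assms(1) obtain Z where "X = X' @ Z \<and> Z @ Y = Y' \<or> X @ Z = X' \<and> Y = Z @ Y'"
    by (auto simp: append_eq_append_conv2)
  then show ?thesis
  proof
    assume h: "X = X' @ Z \<and> Z @ Y = Y'"
    then show ?thesis using spos_contra[of X' Z Y] assms by (cases "Z = []") auto
  next
    assume h: "X @ Z = X' \<and> Y = Z @ Y'"
    then show ?thesis using spos_contra[of X Z Y'] assms by (cases "Z = []") auto
  qed
qed

lemma Gs_spos: "\<forall>p\<in>set ps. dyck (f p) \<Longrightarrow> spos (Gs f ps)"
  using Gs_nn[of ps f] by (auto simp: spos_def)

lemma Gs_inj: "Gs f ps = Gs f ps' \<Longrightarrow> \<forall>p\<in>set ps. dyck (f p) \<Longrightarrow> \<forall>p\<in>set ps'. dyck (f p) \<Longrightarrow>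
   (\<forall>p\<in>set ps. \<forall>p'\<in>set ps'. f p = f p' \<longrightarrow> p = p') \<Longrightarrow> ps = ps'"
proof (induction ps arbitrary: ps')
  case Nil
  from Nil.prems(1) have "Gs f ps' = []" by simp
  then show ?case by (cases ps') simp_all
next
  case (Cons p ps)
  from Cons.prems(1) obtain p' qs where ps': "ps' = p' # qs" by (cases ps') simp_all
  have e: "f p @ Gs f ps = f p' @ Gs f qs" using Cons.prems(1) ps' by simp
  have d1: "dyck (f p)" "\<forall>p\<in>set ps. dyck (f p)" using Cons.prems(2) by simp_all
  have d2: "dyck (f p')" "\<forall>p\<in>set qs. dyck (f p)" using Cons.prems(3) ps' by simp_all
  have "f p = f p'"
    by (rule split_pos[OF e d1(1) d2(1) Gs_spos[OF d1(2)] Gs_spos[OF d2(2)]])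
  then have pp: "p = p'" using Cons.prems(4) ps' by simp
  have "Gs f ps = Gs f qs" using e \<open>f p = f p'\<close> by simp
  moreover have "\<forall>p\<in>set ps. \<forall>p'\<in>set qs. f p = f p' \<longrightarrow> p = p'" using Cons.prems(4) ps' by simp
  ultimately have "ps = qs" using Cons.IH[of qs] d1 d2 by blast
  then show ?case using ps' pp by simp
qed

lemma rep_cancel0: "replicate s D @ U # a = replicate t D @ U # b \<Longrightarrow> s = t \<and> a = b"
proof (induction s arbitrary: t)
  case 0 then show ?case by (cases t) auto
next
  case (Suc s) then show ?case by (cases t) auto
qed

lemma rep_cancel: "xs @ [U] @ replicate s D = ys @ [U] @ replicate t D \<Longrightarrow> xs = ys \<and> s = t"
proof -
  assume "xs @ [U] @ replicate s D = ys @ [U] @ replicate t D"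
  then have "rev (xs @ [U] @ replicate s D) = rev (ys @ [U] @ replicate t D)" by simp
  then have "replicate s D @ U # rev xs = replicate t D @ U # rev ys" by simp
  from rep_cancel0[OF this] show ?thesis by simp
qed

lemma phi_decomp:
  assumes "dyck (x # xs)" "splitaux 1 xs = (A, B)" "dyck A"
  shows "\<exists>T. phi (x # xs) = U # (T @ replicate (length (bprims A)) D) @ D # phi B \<and>
     Gs (\<lambda>p. phi (butlast (tl p))) (bprims A) @ [U] = U # T \<and> dyck (T @ replicate (length (bprims A)) D)"
proof -
  define ps where "ps = bprims A"
  define f where "f = (\<lambda>p. phi (butlast (tl p)))"
  define s where "s = length ps"
  have ps: "\<forall>p\<in>set ps. pos_prim p" using bprims_dyck[OF assms(3)] ps_def by auto
  have "\<forall>p\<in>set ps. dyck (f p)" unfolding f_def using ps inner_pos phi_props by blast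
  then obtain T where T: "Gs f ps @ [U] = U # T" "nn 0 T" "ht T = int s"
    using Gs_T[of ps f] s_def by auto
  have eq: "phi (x # xs) = Gs f ps @ [U, D] @ replicate s D @ phi B"
    unfolding f_def ps_def s_def by (rule phi_U[OF assms(2)])
  have r: "D # replicate s D = replicate s D @ [D]" by (induction s) auto
  have "phi (x#xs) = (Gs f ps @ [U]) @ (D # replicate s D) @ phi B" using eq by simp
  also have "\<dots> = (U # T) @ (replicate s D @ [D]) @ phi B" by (simp only: T(1) r)
  finally have "phi (x # xs) = U # (T @ replicate s D) @ D # phi B" by simp
  moreover have "dyck (T @ replicate s D)" using T by (simp add: dyck_nn nn_replicate_D)
  ultimately show ?thesis using T unfolding ps_def s_def f_def by blast
qed

lemma phi_inj: "dyck W \<Longrightarrow> dyck W' \<Longrightarrow> phi W = phi W' \<Longrightarrow> W = W'"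
proof (induction W arbitrary: W' rule: phi.induct)
  case 1 then show ?case using phi_props[of W'] by auto
next
  case (2 x xs)
  have "W' \<noteq> []" using phi_props[OF "2.prems"(1)] phi_props[OF "2.prems"(2)] "2.prems"(3) by force
  then obtain x' xs' where W': "W' = x' # xs'" by (cases W') auto
  have x: "x = U" using dyck_hd[OF "2.prems"(1)] by simp
  have x': "x' = U" using dyck_hd[OF "2.prems"(2)] W' by simp
  obtain A B where AB: "xs = A @ D # B" "dyck A" "dyck B" and sp: "splitaux 1 xs = (A, B)"
    using dyck_split "2.prems"(1) x by blast
  obtain A' B' where AB': "xs' = A' @ D # B'" "dyck A'" "dyck B'" and sp': "splitaux 1 xs' = (A', B')"
    using dyck_split "2.prems"(2) x' W' by blast
  define f where "f = (\<lambda>p. phi (butlast (tl p)))"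
  obtain T where T: "phi (x # xs) = U # (T @ replicate (length (bprims A)) D) @ D # phi B"
     "Gs f (bprims A) @ [U] = U # T" "dyck (T @ replicate (length (bprims A)) D)"
    using phi_decomp[OF "2.prems"(1) sp AB(2)] f_def by blast
  obtain T' where T': "phi (x' # xs') = U # (T' @ replicate (length (bprims A')) D) @ D # phi B'"
     "Gs f (bprims A') @ [U] = U # T'" "dyck (T' @ replicate (length (bprims A')) D)"
    using phi_decomp[OF "2.prems"(2)[unfolded W'] sp' AB'(2)] f_def by blast
  have eqp: "(T @ replicate (length (bprims A)) D) @ D # phi B = (T' @ replicate (length (bprims A')) D) @ D # phi B'"
    using "2.prems"(3) T(1) T'(1) W' by simp
  have "splitaux 1 ((T @ replicate (length (bprims A)) D) @ D # phi B) = (T @ replicate (length (bprims A)) D, phi B)"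
    using T(3) by (rule splitaux_dyck)
  moreover have "splitaux 1 ((T' @ replicate (length (bprims A')) D) @ D # phi B') = (T' @ replicate (length (bprims A')) D, phi B')"
    using T'(3) by (rule splitaux_dyck)
  ultimately have Q: "T @ replicate (length (bprims A)) D = T' @ replicate (length (bprims A')) D"
    and PB: "phi B = phi B'" using eqp by auto
  have BB: "B = B'" using "2.IH"(2)[OF sp[symmetric] AB(3) AB'(3) PB] .
  have "Gs f (bprims A) @ [U] @ replicate (length (bprims A)) D = Gs f (bprims A') @ [U] @ replicate (length (bprims A')) D"
    using Q T(2) T'(2) by (metis Cons_eq_appendI append_assoc list.inject)
  then have G: "Gs f (bprims A) = Gs f (bprims A')" using rep_cancel by blast
  have psA: "\<forall>p\<in>set (bprims A). pos_prim p" "concat (bprims A) = A" using bprims_dyck[OF AB(2)] by auto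
  have psA': "\<forall>p\<in>set (bprims A'). pos_prim p" "concat (bprims A') = A'" using bprims_dyck[OF AB'(2)] by auto
  have "bprims A = bprims A'"
  proof (rule Gs_inj[OF G])
    show "\<forall>p\<in>set (bprims A). dyck (f p)" unfolding f_def using psA inner_pos phi_props by blast
    show "\<forall>p\<in>set (bprims A'). dyck (f p)" unfolding f_def using psA' inner_pos phi_props by blast
    show "\<forall>p\<in>set (bprims A). \<forall>p'\<in>set (bprims A'). f p = f p' \<longrightarrow> p = p'"
    proof (intro ballI impI)
      fix p p' assume p: "p \<in> set (bprims A)" and p': "p' \<in> set (bprims A')" and e: "f p = f p'"
      have i: "dyck (butlast (tl p))" "p = U # butlast (tl p) @ [D]" using inner_pos psA p by blast+
      have i': "dyck (butlast (tl p'))" "p' = U # butlast (tl p') @ [D]" using inner_pos psA' p' by blast+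
      have "butlast (tl p) = butlast (tl p')"
        using "2.IH"(1)[OF sp[symmetric] p i(1) i'(1)] e f_def by simp
      then show "p = p'" using i(2) i'(2) by metis
    qed
  qed
  then have "A = A'" using psA psA' by metis
  then show ?case using AB AB' BB x x' W' by simp
qed

lemma beta_eq: "dyck A \<Longrightarrow> beta (U # A @ D # C) = U # C @ D # A"
  unfolding beta_def using splitaux_dyck[of A C] by simp



lemma beta_props:
  assumes "dyck X" "X \<noteq> []"
  shows "\<exists>A C. X = U # A @ D # C \<and> dyck A \<and> dyck C \<and> beta X = U # C @ D # A"
proof -
  have "hd X = U" using dyck_hd assms by blast
  then obtain xs where X: "X = U # xs" using assms by (cases X) auto
  obtain A C where "xs = A @ D # C" "dyck A" "dyck C" "splitaux 1 xs = (A, C)"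
    using dyck_split assms X by blast
  then show ?thesis using X beta_eq by blast
qed

lemma neg_block_decomp:
  assumes "blk b" "hd b \<noteq> U"
  shows "\<exists>A C. alpha b = U # A @ D # C \<and> dyck A \<and> dyck C \<and> beta (alpha b) = U # C @ D # A
     \<and> phi_block b = alpha (phi (U # C @ D # A))"
proof -
  have nd: "neg_dyck b" using assms by (auto simp: blk_def)
  then have "dyck (alpha b)" "alpha b \<noteq> []" by (auto simp: neg_dyck_alpha)
  from beta_props[OF this] obtain A C where
    "alpha b = U # A @ D # C" "dyck A" "dyck C" "beta (alpha b) = U # C @ D # A" by blast
  then show ?thesis using assms by (auto simp: phi_block_def)
qed

lemma pb_props:
  assumes "blk b"
  shows "blk (phi_block b) \<and> hd (phi_block b) = hd b \<and> last (phi_block b) = flip (hd b) \<and>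
    length (phi_block b) = length b \<and> ht (phi_block b) = 0 \<and> pk (phi_block b) = oddc 0 b"
proof (cases "hd b = U")
  case True
  then have d: "dyck b" "b \<noteq> []" using assms by (auto simp: blk_def neg_dyck_def)
  have pb: "phi_block b = phi b" using True by (simp add: phi_block_def)
  from phi_props[OF d(1)] d have "length (phi b) = length b" "dyck (phi b)" "pk (phi b) = oddc 0 b"
    "hd (phi b) = U" "last (phi b) = D" by auto
  moreover then have "phi b \<noteq> []" using d by auto
  ultimately show ?thesis using pb True by (auto simp: blk_def dyck_nn)
next
  case False
  then have hb: "hd b = D" by (cases "hd b") auto
  from neg_block_decomp[OF assms False] obtain A C where
    AC: "alpha b = U # A @ D # C" "dyck A" "dyck C" "phi_block b = alpha (phi (U # C @ D # A))" by blast
  define Y where "Y = U # C @ D # A"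
  have dY: "dyck Y" unfolding Y_def using AC dyck_wrap by blast
  from phi_props[OF dY] have Z: "length (phi Y) = length Y" "dyck (phi Y)" "pk (phi Y) = oddc 0 Y"
    "hd (phi Y) = U" "last (phi Y) = D" by (auto simp: Y_def)
  have Zne: "phi Y \<noteq> []" using Z(1) by (auto simp: Y_def)
  have pb: "phi_block b = alpha (phi Y)" using AC Y_def by simp
  have blk: "blk (alpha (phi Y))" using Z Zne by (auto simp: blk_def neg_dyck_alpha hd_alpha)
  have hdp: "hd (alpha (phi Y)) = D" using Z Zne by (simp add: hd_alpha)
  have lap: "last (alpha (phi Y)) = U" using Z Zne by (simp add: last_alpha)
  have len: "length (alpha (phi Y)) = length b"
    using Z(1) arg_cong[OF AC(1), of length] by (simp add: Y_def)
  have htz: "ht (alpha (phi Y)) = 0" using Z(2) by (simp add: dyck_nn)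
  have "int (pk (phi Y)) - int (pk (alpha (phi Y))) = 1" using pk_alpha[OF Zne] Z by simp
  then have pkz: "pk (alpha (phi Y)) + 1 = oddc 0 Y" using Z(3) by simp
  have oY: "oddc 0 Y = 1 + oddc 1 C + oddc 0 A"
    unfolding Y_def using AC by (simp add: oddc_append dyck_nn)
  have "oddc 0 b = oddc 0 (alpha (alpha b))" by simp
  also have "\<dots> = oddd 0 (alpha b)" using oddc_alpha[of 0 "alpha b"] by simp
  also have "\<dots> = oddd 1 A + oddd 0 C" using AC by (simp add: oddd_append dyck_nn)
  also have "oddd 1 A = oddc 2 A" using oddc_oddd[of A 1] AC by (simp add: dyck_nn)
  also have "oddc 2 A = oddc 0 A" by (rule oddc_parity) simp
  also have "oddd 0 C = oddc 1 C" using oddc_oddd[of C 0] AC by (simp add: dyck_nn)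
  finally have "oddc 0 b = oddc 0 A + oddc 1 C" .
  then have "pk (alpha (phi Y)) = oddc 0 b" using pkz oY by simp
  then show ?thesis using pb blk hdp lap len htz hb by simp
qed

lemma beta_inj: "dyck X \<Longrightarrow> X \<noteq> [] \<Longrightarrow> dyck X' \<Longrightarrow> X' \<noteq> [] \<Longrightarrow> beta X = beta X' \<Longrightarrow> X = X'"
proof -
  assume a: "dyck X" "X \<noteq> []" "dyck X'" "X' \<noteq> []" "beta X = beta X'"
  from beta_props[OF a(1,2)] obtain A C where 1: "X = U # A @ D # C" "dyck A" "dyck C" "beta X = U # C @ D # A" by blast
  from beta_props[OF a(3,4)] obtain A' C' where 2: "X' = U # A' @ D # C'" "dyck A'" "dyck C'" "beta X' = U # C' @ D # A'" by blast
  have "C @ D # A = C' @ D # A'" using 1 2 a(5) by simp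
  then have "splitaux 1 (C @ D # A) = splitaux 1 (C' @ D # A')" by simp
  then have "C = C' \<and> A = A'" using splitaux_dyck[OF 1(3)] splitaux_dyck[OF 2(3)] by simp
  then show ?thesis using 1 2 by simp
qed

lemma pb_inj: "blk b \<Longrightarrow> blk b' \<Longrightarrow> hd b = hd b' \<Longrightarrow> phi_block b = phi_block b' \<Longrightarrow> b = b'"
proof (cases "hd b = U")
  case True
  assume a: "blk b" "blk b'" "hd b = hd b'" "phi_block b = phi_block b'"
  then have "dyck b" "dyck b'" "phi b = phi b'" using True by (auto simp: blk_def neg_dyck_def phi_block_def)
  then show ?thesis by (rule phi_inj)
next
  case False
  assume a: "blk b" "blk b'" "hd b = hd b'" "phi_block b = phi_block b'"
  have nd: "neg_dyck b" "neg_dyck b'" using a False by (auto simp: blk_def)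
  then have d: "dyck (alpha b)" "alpha b \<noteq> []" "dyck (alpha b')" "alpha b' \<noteq> []" by (auto simp: neg_dyck_alpha)
  have "alpha (phi (beta (alpha b))) = alpha (phi (beta (alpha b')))"
    using a False by (simp add: phi_block_def)
  then have e: "phi (beta (alpha b)) = phi (beta (alpha b'))" by (rule alpha_inj)
  have db: "dyck (beta (alpha b))" "dyck (beta (alpha b'))"
    using beta_props[OF d(1,2)] beta_props[OF d(3,4)] dyck_wrap by auto
  have "beta (alpha b) = beta (alpha b')" using phi_inj[OF db e] .
  then have "alpha b = alpha b'" using beta_inj d by blast
  then show ?thesis by (rule alpha_inj)
qed

lemma alt_tl: "alt (b # R) \<Longrightarrow> alt R" by (cases R) auto
lemma alt_map: "\<forall>b\<in>set R. hd (f b) = hd b \<Longrightarrow> alt R \<Longrightarrow> alt (map f R)"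
  by (induction R rule: alt.induct) auto

lemma pk_concat: "\<forall>c\<in>set cs. c \<noteq> [] \<and> last c = flip (hd c) \<Longrightarrow> alt cs \<Longrightarrow>
   pk (concat cs) = sum_list (map pk cs)"
proof (induction cs rule: alt.induct)
  case (1 p q ps)
  have "pk (p @ concat (q # ps)) = pk p + pk (concat (q # ps))"
  proof -
    have "p \<noteq> []" "q \<noteq> []" "last p = flip (hd p)" "hd p \<noteq> hd q" using "1.prems" by auto
    then have "\<not> (last p = U \<and> hd (concat (q # ps)) = D)" by (cases "hd p"; cases "hd q") auto
    then show ?thesis using pk_append[of p "concat (q # ps)"] by simp
  qed
  then show ?case using 1 by simp
next
  case "2_1" then show ?case by simp
next
  case ("2_2" p) then show ?case by simp
qed

lemma oddc_concat: "\<forall>c\<in>set cs. ht c = 0 \<Longrightarrow> oddc 0 (concat cs) = sum_list (map (oddc 0) cs)"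
  by (induction cs) (auto simp: oddc_append)

lemma ht_concat: "\<forall>c\<in>set cs. ht c = 0 \<Longrightarrow> ht (concat cs) = 0"
  by (induction cs) auto

lemma len_concat_pb: "\<forall>b\<in>set R. blk b \<Longrightarrow> length (concat (map phi_block R)) = length (concat R)"
  by (induction R) (auto simp: pb_props)

lemma R_props: "ht w = 0 \<Longrightarrow> concat (runs (bprims w)) = w \<and> (\<forall>b\<in>set (runs (bprims w)). blk b) \<and> alt (runs (bprims w))"
  using bprims_bil[of w] runs_props[of "bprims w"] by auto

lemma phi'_props: "bilateral w \<Longrightarrow> bilateral (phi' w) \<and> length (phi' w) = length w \<and> peaks (phi' w) = odd_ups w"
proof -
  assume "bilateral w"
  then have h: "ht w = 0" by (simp add: bilateral_def)
  define R where "R = runs (bprims w)"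
  have R: "concat R = w" "\<forall>b\<in>set R. blk b" "alt R" using R_props[OF h] R_def by auto
  have pw: "phi' w = concat (map phi_block R)" by (simp add: phi'_def R_def)
  have "\<forall>c\<in>set (map phi_block R). ht c = 0" using R(2) pb_props by auto
  then have b: "bilateral (phi' w)" using pw ht_concat by (simp add: bilateral_def)
  have l: "length (phi' w) = length w" using pw len_concat_pb R by simp
  have c1: "\<forall>c\<in>set (map phi_block R). c \<noteq> [] \<and> last c = flip (hd c)"
    using R(2) pb_props blk_ne by fastforce
  have a1: "alt (map phi_block R)" using alt_map[of R phi_block] R pb_props by blast
  have "pk (phi' w) = sum_list (map pk (map phi_block R))" using pk_concat[OF c1 a1] pw by simp
  also have "\<dots> = sum_list (map (oddc 0) R)"
  proof -
    have m: "map pk (map phi_block R) = map (oddc 0) R" using R(2) pb_props by (simp add: map_eq_conv)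
    show ?thesis by (subst m) (rule refl)
  qed
  also have "\<dots> = oddc 0 w"
  proof -
    have "\<forall>c\<in>set R. ht c = 0" using R(2) by (auto simp: blk_def dyck_nn neg_dyck_def)
    from oddc_concat[OF this] R(1) show ?thesis by simp
  qed
  finally show ?thesis using b l by (simp add: peaks_pk odd_ups_oddc)
qed

lemma blocks_inj: "concat (map phi_block R) = concat (map phi_block R') \<Longrightarrow>
  \<forall>b\<in>set R. blk b \<Longrightarrow> \<forall>b\<in>set R'. blk b \<Longrightarrow> alt R \<Longrightarrow> alt R' \<Longrightarrow> R = R'"
proof (induction R arbitrary: R')
  case Nil
  then have "\<forall>b\<in>set R'. phi_block b = []" by simp
  then show ?case using Nil.prems(3) pb_props blk_ne by (cases R') fastforce+
next
  case (Cons b R)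
  have pbne: "phi_block b \<noteq> []" using Cons.prems(2) pb_props blk_ne by auto
  have "R' \<noteq> []"
  proof
    assume "R' = []" then show False using Cons.prems(1) pbne by simp
  qed
  then obtain b' Q where R': "R' = b' # Q" by (cases R') auto
  have bb: "blk b" "blk b'" using Cons.prems(2,3) R' by auto
  have pbne': "phi_block b' \<noteq> []" using bb(2) pb_props blk_ne by blast
  define Y where "Y = concat (map phi_block R)"
  define Y' where "Y' = concat (map phi_block Q)"
  have e: "phi_block b @ Y = phi_block b' @ Y'" using Cons.prems(1) R' Y_def Y'_def by simp
  have "hd (phi_block b) = hd (phi_block b')" using e pbne pbne' by (metis hd_append2)
  then have hh: "hd b = hd b'" using pb_props bb by metis
  have hdY: "\<And>c R2. \<forall>b\<in>set (c # R2). blk b \<Longrightarrow> concat (map phi_block (c # R2)) \<noteq> [] \<and>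
      hd (concat (map phi_block (c # R2))) = hd c"
  proof -
    fix c R2 assume "\<forall>b\<in>set (c # R2). blk b"
    then have "blk c" by simp
    then have "phi_block c \<noteq> []" "hd (phi_block c) = hd c" using pb_props blk_ne by blast+
    then show "concat (map phi_block (c # R2)) \<noteq> [] \<and> hd (concat (map phi_block (c # R2))) = hd c" by simp
  qed
  have fl: "\<And>x y :: step. x \<noteq> y \<Longrightarrow> y = flip x" by (metis flip.elims)
  have Yhd: "Y = [] \<or> hd Y = flip (hd b)"
  proof (cases R)
    case Nil then show ?thesis by (simp add: Y_def)
  next
    case (Cons c R2)
    with \<open>\<forall>b\<in>set (b # R). blk b\<close> have bl: "\<forall>b\<in>set (c # R2). blk b" by simp
    from \<open>alt (b # R)\<close> Cons have "hd b \<noteq> hd c" by simp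
    then show ?thesis using hdY[OF bl] Cons fl Y_def by auto
  qed
  have Y'hd: "Y' = [] \<or> hd Y' = flip (hd b)"
  proof (cases Q)
    case Nil then show ?thesis by (simp add: Y'_def)
  next
    case (Cons c R2)
    with \<open>\<forall>b\<in>set R'. blk b\<close> R' have bl: "\<forall>b\<in>set (c # R2). blk b" by simp
    from \<open>alt R'\<close> R' Cons have "hd b' \<noteq> hd c" by simp
    then show ?thesis using hdY[OF bl] Cons fl Y'_def hh by auto
  qed
  have pp: "phi_block b = phi_block b'"
  proof (cases "hd b")
    case U
    have "dyck (phi_block b)" "dyck (phi_block b')"
      using pb_props[OF bb(1)] pb_props[OF bb(2)] U hh by (auto simp: blk_def)
    then show ?thesis using split_dyck[OF e] Yhd Y'hd U by auto
  next
    case D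
    have "neg_dyck (phi_block b)" "neg_dyck (phi_block b')"
      using pb_props[OF bb(1)] pb_props[OF bb(2)] D hh by (auto simp: blk_def)
    then have d: "dyck (alpha (phi_block b))" "dyck (alpha (phi_block b'))" by (auto simp: neg_dyck_alpha)
    have e2: "alpha (phi_block b) @ alpha Y = alpha (phi_block b') @ alpha Y'"
      using arg_cong[OF e, of alpha] by simp
    have "alpha Y = [] \<or> hd (alpha Y) = D" "alpha Y' = [] \<or> hd (alpha Y') = D"
      using Yhd Y'hd D by (cases "Y = []"; cases "Y' = []"; auto simp: hd_alpha)+
    then have "alpha (phi_block b) = alpha (phi_block b')" using split_dyck[OF e2 d] by blast
    then show ?thesis by (rule alpha_inj)
  qed
  have bb': "b = b'" using pb_inj[OF bb hh pp] .
  have "Y = Y'" using e pp by simp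
  moreover have "alt R" "alt Q" using Cons.prems(4,5) R' alt_tl by auto
  ultimately have "R = Q" using Cons.IH[of Q] Cons.prems R' Y_def Y'_def by simp
  then show ?case using R' bb' by simp
qed


lemma phi'_inj: "bilateral w \<Longrightarrow> bilateral w' \<Longrightarrow> phi' w = phi' w' \<Longrightarrow> w = w'"
proof -
  assume a: "bilateral w" "bilateral w'" "phi' w = phi' w'"
  have h: "ht w = 0" "ht w' = 0" using a by (auto simp: bilateral_def)
  define R where "R = runs (bprims w)"
  define R' where "R' = runs (bprims w')"
  have r: "concat R = w" "\<forall>b\<in>set R. blk b" "alt R" using R_props[OF h(1)] R_def by auto
  have r': "concat R' = w'" "\<forall>b\<in>set R'. blk b" "alt R'" using R_props[OF h(2)] R'_def by auto
  have "concat (map phi_block R) = concat (map phi_block R')"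
    using a(3) unfolding phi'_def R_def R'_def .
  then have "R = R'" using blocks_inj r(2,3) r'(2,3) by blast
  then show ?thesis using r(1) r'(1) by simp
qed

theorem theorem2:
  fixes n k :: nat
  shows "bij_betw phi'
           {w. bilateral w \<and> length w = 2 * n \<and> odd_ups w = k}
           {w. bilateral w \<and> length w = 2 * n \<and> peaks w = k}"
proof -
  define S where "S = {w. bilateral w \<and> length w = 2 * n}"
  have U: "(UNIV :: step set) = {U, D}" using step.exhaust by auto
  have "finite {xs. set xs \<subseteq> (UNIV :: step set) \<and> length xs = 2 * n}"
    by (rule finite_lists_length_eq) (simp add: U)
  then have fin: "finite S" unfolding S_def by (rule finite_subset[rotated]) auto
  have sub: "phi' ` S \<subseteq> S"
  proof
    fix x assume "x \<in> phi' ` S"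
    then obtain w where "w \<in> S" "x = phi' w" by blast
    then show "x \<in> S" using phi'_props[of w] by (simp add: S_def)
  qed
  have inj: "inj_on phi' S"
  proof (rule inj_onI)
    fix x y assume "x \<in> S" "y \<in> S" "phi' x = phi' y"
    then show "x = y" using phi'_inj[of x y] by (simp add: S_def)
  qed
  have surj: "phi' ` S = S" using endo_inj_surj[OF fin sub inj] .
  show ?thesis unfolding bij_betw_def
  proof
    show "inj_on phi' {w. bilateral w \<and> length w = 2 * n \<and> odd_ups w = k}"
      by (rule inj_on_subset[OF inj]) (auto simp: S_def)
    show "phi' ` {w. bilateral w \<and> length w = 2 * n \<and> odd_ups w = k} =
          {w. bilateral w \<and> length w = 2 * n \<and> peaks w = k}"
    proof
      show "phi' ` {w. bilateral w \<and> length w = 2 * n \<and> odd_ups w = k} \<subseteq>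
          {w. bilateral w \<and> length w = 2 * n \<and> peaks w = k}"
      proof
        fix x assume "x \<in> phi' ` {w. bilateral w \<and> length w = 2 * n \<and> odd_ups w = k}"
        then obtain w where "bilateral w" "length w = 2 * n" "odd_ups w = k" "x = phi' w" by blast
        then show "x \<in> {w. bilateral w \<and> length w = 2 * n \<and> peaks w = k}" using phi'_props[of w] by simp
      qed
    next
      show "{w. bilateral w \<and> length w = 2 * n \<and> peaks w = k} \<subseteq>
           phi' ` {w. bilateral w \<and> length w = 2 * n \<and> odd_ups w = k}"
      proof
        fix w assume w: "w \<in> {w. bilateral w \<and> length w = 2 * n \<and> peaks w = k}"
        then have "w \<in> phi' ` S" using surj by (auto simp: S_def)
        then obtain v where v: "v \<in> S" "w = phi' v" by blast
        then have "odd_ups v = k" using w phi'_props[of v] by (auto simp: S_def)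
        then show "w \<in> phi' ` {w. bilateral w \<and> length w = 2 * n \<and> odd_ups w = k}"
          using v by (auto simp: S_def)
      qed
    qed
  qed
qed

end
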